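(* Let $G$ be a connected graph with at least $3$ vertices such that $D(G)$ is an infinite cardinal. Then $D'(G)\le D(G)$.
   Context: Graphs are simple and may be infinite. A colouring (of vertices or edges) is distinguishing if the identity is the only automorphism of $G$ preserving it, where $\gamma$ preserves a vertex colouring $c$ if $c\circ\gamma=c$ and an edge colouring $d$ if $d(\gamma(u)\gamma(v))=d(uv)$ for all edges $uv$. $D(G)$ is the least number (cardinal) of colours in a distinguishing vertex colouring, and $D'(G)$ the least number of colours in a distinguishing edge colouring. *)

theory Defs
  imports Main
begin

definition simple_graph :: "'a set \<Rightarrow> 'a set set \<Rightarrow> bool" where
  "simple_graph V E \<longleftrightarrow> (\<forall>e\<in>E. \<exists>u v. u \<in> V \<and> v \<in> V \<and> u \<noteq> v \<and> e = {u, v})"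

definition connected_graph :: "'a set \<Rightarrow> 'a set set \<Rightarrow> bool" where
  "connected_graph V E \<longleftrightarrow>
     (\<forall>u\<in>V. \<forall>v\<in>V. (u, v) \<in> {(x, y). {x, y} \<in> E}\<^sup>*)"

definition automorphism :: "'a set \<Rightarrow> 'a set set \<Rightarrow> ('a \<Rightarrow> 'a) \<Rightarrow> bool" where
  "automorphism V E g \<longleftrightarrow> bij_betw g V V \<and>
     (\<forall>u\<in>V. \<forall>v\<in>V. {u, v} \<in> E \<longleftrightarrow> {g u, g v} \<in> E)"

definition distinguishing_vertex_colouring ::
  "'a set \<Rightarrow> 'a set set \<Rightarrow> ('a \<Rightarrow> 'c) \<Rightarrow> 'c set \<Rightarrow> bool" where
  "distinguishing_vertex_colouring V E c C \<longleftrightarrow> c ` V \<subseteq> C \<and>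
     (\<forall>g. automorphism V E g \<and> (\<forall>v\<in>V. c (g v) = c v) \<longrightarrow> (\<forall>v\<in>V. g v = v))"

definition distinguishing_edge_colouring ::
  "'a set \<Rightarrow> 'a set set \<Rightarrow> ('a set \<Rightarrow> 'c) \<Rightarrow> 'c set \<Rightarrow> bool" where
  "distinguishing_edge_colouring V E d C \<longleftrightarrow> d ` E \<subseteq> C \<and>
     (\<forall>g. automorphism V E g \<and> (\<forall>u\<in>V. \<forall>v\<in>V. {u, v} \<in> E \<longrightarrow> d {g u, g v} = d {u, v})
        \<longrightarrow> (\<forall>v\<in>V. g v = v))"

end

theory Submission
  imports Defs
begin

lemma sg_mem:
  assumes "simple_graph V E" "{x, y} \<in> E"
  shows "x \<in> V" "y \<in> V" "x \<noteq> y"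
  using assms unfolding simple_graph_def by (auto simp: doubleton_eq_iff)

lemma aut_path:
  assumes sg: "simple_graph V E" and aut: "automorphism V E g" and r: "r \<in> V" "g r = r"
  shows "(r, v) \<in> {(x, y). {x, y} \<in> E} ^^ n \<Longrightarrow> (r, g v) \<in> {(x, y). {x, y} \<in> E} ^^ n"
proof (induction n arbitrary: v)
  case 0
  then show ?case using r by simp
next
  case (Suc n)
  then obtain y where y: "(r, y) \<in> {(x, y). {x, y} \<in> E} ^^ n" "{y, v} \<in> E" by auto
  have yv: "y \<in> V" "v \<in> V" using sg_mem[OF sg y(2)] by auto
  have "{g y, g v} \<in> E" using aut yv y(2) unfolding automorphism_def by blast
  with Suc.IH[OF y(1)] show ?case by auto
qed

lemma aut_inv:
  assumes aut: "automorphism V E g"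
  shows "automorphism V E (inv_into V g)"
proof -
  have b: "bij_betw g V V" using aut unfolding automorphism_def by auto
  have bi: "bij_betw (inv_into V g) V V" using bij_betw_inv_into[OF b] .
  have "\<forall>u\<in>V. \<forall>v\<in>V. {u, v} \<in> E \<longleftrightarrow> {inv_into V g u, inv_into V g v} \<in> E"
  proof (intro ballI)
    fix u v assume uv: "u \<in> V" "v \<in> V"
    have iu: "inv_into V g u \<in> V" "inv_into V g v \<in> V" using bi uv bij_betwE by blast+
    have "g (inv_into V g u) = u" "g (inv_into V g v) = v"
      using uv b by (auto simp: bij_betw_def f_inv_into_f)
    then show "{u, v} \<in> E \<longleftrightarrow> {inv_into V g u, inv_into V g v} \<in> E"
      using aut iu unfolding automorphism_def by metis
  qed
  with bi show ?thesis unfolding automorphism_def by auto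
qed

lemma aut_path_iff:
  assumes sg: "simple_graph V E" and aut: "automorphism V E g" and r: "r \<in> V" "g r = r"
    and v: "v \<in> V"
  shows "(r, g v) \<in> {(x, y). {x, y} \<in> E} ^^ n \<longleftrightarrow> (r, v) \<in> {(x, y). {x, y} \<in> E} ^^ n"
proof
  assume "(r, v) \<in> {(x, y). {x, y} \<in> E} ^^ n"
  then show "(r, g v) \<in> {(x, y). {x, y} \<in> E} ^^ n" using aut_path[OF sg aut r] by blast
next
  assume h: "(r, g v) \<in> {(x, y). {x, y} \<in> E} ^^ n"
  have b: "bij_betw g V V" using aut unfolding automorphism_def by auto
  have ir: "inv_into V g r = r" using b r by (metis bij_betw_def inv_into_f_f)
  have iv: "inv_into V g (g v) = v" using b v by (metis bij_betw_def inv_into_f_f)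
  show "(r, v) \<in> {(x, y). {x, y} \<in> E} ^^ n"
    using aut_path[OF sg aut_inv[OF aut] r(1) ir h] iv by simp
qed

theorem mainTheorem7:
  fixes V :: "'a set" and E :: "'a set set"
  assumes "simple_graph V E"
    and "connected_graph V E"
    and "infinite V \<or> card V \<ge> 3"
    and "\<forall>(C :: 'c set) c. finite C \<longrightarrow> \<not> distinguishing_vertex_colouring V E c C"
  shows "\<forall>(C :: 'c set). (\<exists>c. distinguishing_vertex_colouring V E c C) \<longrightarrow>
           (\<exists>d. distinguishing_edge_colouring V E d C)"
proof (intro allI impI)
  fix C :: "'c set"
  assume "\<exists>c. distinguishing_vertex_colouring V E c C"
  then obtain c where c: "distinguishing_vertex_colouring V E c C" by blast
  have sg: "simple_graph V E" using assms(1) .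
  let ?R = "{(x, y). {x, y} \<in> E}"
  have infC: "infinite C" using assms(4) c by blast
  obtain f where f: "bij_betw f (C \<times> C) C"
    using infC card_of_Times_same_infinite card_of_ordIso by blast
  obtain a b where ab: "a \<in> C" "b \<in> C" "a \<noteq> b"
    using infC by (metis finite.simps finite_insert insertI1 insert_iff subsetI finite_subset)
  have cV: "c ` V \<subseteq> C" using c unfolding distinguishing_vertex_colouring_def by auto
  obtain x1 x2 x3 where x: "x1 \<in> V" "x2 \<in> V" "x3 \<in> V" "x1 \<noteq> x2" "x1 \<noteq> x3" "x2 \<noteq> x3"
  proof -
    have "\<exists>S. S \<subseteq> V \<and> card S = 3"
      using assms(3) by (metis infinite_arbitrarily_large obtain_subset_with_card_n)
    then obtain S where "S \<subseteq> V" "card S = 3" by blast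
    then show ?thesis using that by (auto simp: card_3_iff)
  qed
  obtain r p q where rpq: "r \<in> V" "{r, p} \<in> E" "{r, q} \<in> E" "p \<noteq> q"
  proof (rule ccontr)
    assume nd: "\<not> thesis"
    have deg: "\<And>z u w. z \<in> V \<Longrightarrow> {z, u} \<in> E \<Longrightarrow> {z, w} \<in> E \<Longrightarrow> u = w"
      using that nd by blast
    have reach: "(x1, z) \<in> ?R\<^sup>* \<Longrightarrow> z = x1 \<or> {x1, z} \<in> E" for z
    proof (induction rule: rtrancl_induct)
      case base then show ?case by simp
    next
      case (step y z)
      then have yz: "{y, z} \<in> E" by simp
      show ?case
      proof (cases "y = x1")
        case True then show ?thesis using yz by simp
      next
        case False
        then have "{x1, y} \<in> E" using step by simp
        then have "{y, x1} \<in> E" by (simp add: insert_commute)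
        then have "z = x1" using deg[of y x1 z] yz sg_mem[OF sg yz] by blast
        then show ?thesis by simp
      qed
    qed
    have c2: "x2 = x1 \<or> {x1, x2} \<in> E" "x3 = x1 \<or> {x1, x3} \<in> E"
      using reach assms(2) x unfolding connected_graph_def by blast+
    then have "x2 = x3" using deg[of x1 x2 x3] x by auto
    then show False using x by simp
  qed
  have pr: "p \<noteq> r" "q \<noteq> r" "p \<in> V" "q \<in> V"
    using sg_mem[OF sg rpq(2)] sg_mem[OF sg rpq(3)] by auto
  define level where "level v = (LEAST n. (r, v) \<in> ?R ^^ n)" for v
  define key where "key e = c (SOME x. x \<in> e \<and> (\<forall>y\<in>e. level y \<le> level x))" for e
  define d where "d e = f (key e, if r \<in> e then a else b)" for e
  have keyC: "key e \<in> C" if "e \<in> E" for e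
  proof -
    have "\<exists>u w. u \<in> V \<and> w \<in> V \<and> e = {u, w}" using sg that unfolding simple_graph_def by meson
    then obtain u w where uw: "u \<in> V" "w \<in> V" "e = {u, w}" by blast
    have "\<exists>x. x \<in> e \<and> (\<forall>y\<in>e. level y \<le> level x)"
      using uw by (cases "level u \<le> level w") auto
    then have "(SOME x. x \<in> e \<and> (\<forall>y\<in>e. level y \<le> level x)) \<in> e" by (rule someI2_ex) blast
    then show ?thesis using uw cV unfolding key_def by auto
  qed
  have finj: "f (k1, t1) = f (k2, t2) \<Longrightarrow> k1 \<in> C \<Longrightarrow> k2 \<in> C \<Longrightarrow> t1 \<in> C \<Longrightarrow> t2 \<in> C \<Longrightarrow> k1 = k2 \<and> t1 = t2"
    for k1 k2 t1 t2 using f unfolding bij_betw_def inj_on_def by blast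
  have keyv: "key {u, v} = c v" if "level u < level v" for u v
  proof -
    have "(SOME x. x \<in> {u, v} \<and> (\<forall>y\<in>{u, v}. level y \<le> level x)) = v"
      using that by (intro some_equality) auto
    then show ?thesis unfolding key_def by simp
  qed
  have "distinguishing_edge_colouring V E d C"
    unfolding distinguishing_edge_colouring_def
  proof (intro conjI allI impI)
    show "d ` E \<subseteq> C" using keyC f ab unfolding d_def bij_betw_def by auto
  next
    fix g assume gh: "automorphism V E g \<and> (\<forall>u\<in>V. \<forall>v\<in>V. {u, v} \<in> E \<longrightarrow> d {g u, g v} = d {u, v})"
    then have aut: "automorphism V E g" and pres: "\<And>u v. u \<in> V \<Longrightarrow> v \<in> V \<Longrightarrow> {u, v} \<in> E \<Longrightarrow> d {g u, g v} = d {u, v}"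
      by auto
    have gb: "bij_betw g V V" using aut unfolding automorphism_def by auto
    have gE: "\<And>u v. u \<in> V \<Longrightarrow> v \<in> V \<Longrightarrow> {u, v} \<in> E \<Longrightarrow> {g u, g v} \<in> E"
      using aut unfolding automorphism_def by blast
    have tagr: "r \<in> {g r, g z}" if z: "z \<in> V" "{r, z} \<in> E" for z
    proof (rule ccontr)
      assume n: "r \<notin> {g r, g z}"
      have "d {g r, g z} = d {r, z}" using pres rpq(1) z by blast
      then have "f (key {g r, g z}, b) = f (key {r, z}, a)" using n unfolding d_def by simp
      then have "b = a" using finj keyC gE rpq(1) z ab by blast
      then show False using ab by simp
    qed
    have gr: "g r = r"
    proof (rule ccontr)
      assume n: "g r \<noteq> r"
      then have "g p = r" "g q = r" using tagr[of p] tagr[of q] pr rpq by auto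
      then show False using gb pr rpq(4) unfolding bij_betw_def inj_on_def by metis
    qed
    have lev: "level (g v) = level v" if "v \<in> V" for v
      unfolding level_def using aut_path_iff[OF sg aut rpq(1) gr that] by simp
    have cg: "c (g v) = c v" if v: "v \<in> V" for v
    proof (cases "v = r")
      case True then show ?thesis using gr by simp
    next
      case False
      have "(r, v) \<in> ?R\<^sup>*" using assms(2) rpq(1) v unfolding connected_graph_def by blast
      then obtain n where "(r, v) \<in> ?R ^^ n" using rtrancl_power by blast
      then have lv: "(r, v) \<in> ?R ^^ level v" unfolding level_def by (rule LeastI)
      then obtain m where m: "level v = Suc m"
        using False by (cases "level v") auto
      then obtain u where u: "(r, u) \<in> ?R ^^ m" "{u, v} \<in> E" using lv by auto
      have "level u \<le> m" unfolding level_def using u(1) by (rule Least_le)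
      then have lt: "level u < level v" using m by simp
      have uV: "u \<in> V" using sg_mem[OF sg u(2)] by simp
      have "d {g u, g v} = d {u, v}" using pres uV v u(2) by blast
      then have feq: "f (key {g u, g v}, if r \<in> {g u, g v} then a else b) = f (key {u, v}, if r \<in> {u, v} then a else b)"
        unfolding d_def by simp
      have "key {g u, g v} = key {u, v}"
        proof -
          have e1: "{g u, g v} \<in> E" using gE uV v u(2) by blast
          have t: "(if r \<in> {g u, g v} then a else b) \<in> C" "(if r \<in> {u, v} then a else b) \<in> C" using ab by auto
          show ?thesis using finj[OF feq keyC[OF e1] keyC[OF u(2)] t] by blast
        qed
      moreover have "key {g u, g v} = c (g v)" using keyv lt lev uV v by simp
      moreover have "key {u, v} = c v" using keyv lt by simp
      ultimately show ?thesis by simp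
    qed
    show "\<forall>v\<in>V. g v = v" using c aut cg unfolding distinguishing_vertex_colouring_def by blast
  qed
  then show "\<exists>d. distinguishing_edge_colouring V E d C" by blast
qed

end
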